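(* Let $\pi(m)=(1/2)^m$ for $m\in\mathbb{N}^+$ (and $\pi(m)=0$ otherwise), and let the proposal be $q(m,\{m+1\})=\theta=1-q(m,\{m-1\})$ for $m\in\mathbb{Z}$, with $\theta\in(0,1)$. Take $N=1$ and homogeneous weights $W_{m,1}=W=(b-\varepsilon)\,\mathrm{Ber}(s)+\varepsilon$ for all $m$, where $b>1$, $\varepsilon\in(0,1)$, $\mathrm{Ber}(s)$ is a Bernoulli random variable with parameter $s\in(0,1)$, and $s=\frac{1-\varepsilon}{b-\varepsilon}$ so that $\mathbb{E}[W]=1$. Then there exist values of $b$, $\varepsilon$ and $\theta$ for which the Markov chain generated by the noisy kernel $\tilde P_1$ is transient.
   Context: Noisy Metropolis–Hastings kernel $\tilde P_N$: from state $m$, propose $Y\sim q(m,\cdot)$, draw independent weights $W\sim Q_{m,N}$, $U\sim Q_{Y,N}$ (the laws of $W_{m,N}$, $W_{Y,N}$), and move to $Y$ with probability $\min\{1,\frac{\pi(Y)q(Y,m)}{\pi(m)q(m,Y)}\cdot\frac{U}{W}\}$, otherwise stay at $m$ (proposals outside $\mathbb{N}^+$ have $\pi(Y)=0$ and are rejected). *)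

theory Defs
  imports "HOL-Probability.Probability"
begin

definition pi_geo :: "int \<Rightarrow> real" where
  "pi_geo m = (if m \<ge> 1 then (1/2) ^ nat m else 0)"

definition q_rw :: "real \<Rightarrow> int \<Rightarrow> int \<Rightarrow> real" where
  "q_rw \<theta> m y = (if y = m + 1 then \<theta> else if y = m - 1 then 1 - \<theta> else 0)"

definition weight_pmf :: "real \<Rightarrow> real \<Rightarrow> real \<Rightarrow> real pmf" where
  "weight_pmf b \<epsilon> s = map_pmf (\<lambda>x. (b - \<epsilon>) * of_bool x + \<epsilon>) (bernoulli_pmf s)"

definition noisy_accept :: "real \<Rightarrow> real \<Rightarrow> real \<Rightarrow> real \<Rightarrow> int \<Rightarrow> int \<Rightarrow> real" where
  "noisy_accept b \<epsilon> s \<theta> m y =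
     measure_pmf.expectation (pair_pmf (weight_pmf b \<epsilon> s) (weight_pmf b \<epsilon> s))
       (\<lambda>(u, w). min 1 ((pi_geo y * q_rw \<theta> y m) / (pi_geo m * q_rw \<theta> m y) * (u / w)))"

definition noisy_kernel :: "real \<Rightarrow> real \<Rightarrow> real \<Rightarrow> real \<Rightarrow> int \<Rightarrow> int \<Rightarrow> real" where
  "noisy_kernel b \<epsilon> s \<theta> m y =
     (if y \<noteq> m then q_rw \<theta> m y * noisy_accept b \<epsilon> s \<theta> m y
      else 1 - (\<Sum>z\<in>{m - 1, m + 1}. q_rw \<theta> m z * noisy_accept b \<epsilon> s \<theta> m z))"

(* First-passage probabilities f n i j = P_i(first visit to j (at times >= 1) happens at time n),
   for a nearest-neighbour kernel P on Z (P i k = 0 unless k \<in> {i-1,i,i+1}) *)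
fun first_passage :: "(int \<Rightarrow> int \<Rightarrow> real) \<Rightarrow> nat \<Rightarrow> int \<Rightarrow> int \<Rightarrow> real" where
  "first_passage P 0 i j = 0"
| "first_passage P (Suc 0) i j = P i j"
| "first_passage P (Suc (Suc n)) i j =
     (\<Sum>k\<in>{i - 1..i + 1} - {j}. P i k * first_passage P (Suc n) k j)"

definition return_prob :: "(int \<Rightarrow> int \<Rightarrow> real) \<Rightarrow> int \<Rightarrow> real" where
  "return_prob P i = (\<Sum>n. first_passage P (Suc n) i i)"

definition transient_chain :: "(int \<Rightarrow> int \<Rightarrow> real) \<Rightarrow> bool" where
  "transient_chain P \<longleftrightarrow>
     (\<forall>i \<ge> 1. summable (\<lambda>n. first_passage P (Suc n) i i) \<and> return_prob P i < 1)"

end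

theory Submission imports Defs begin

lemma nbhd: "{i - 1..i + 1::int} = {i - 1, i, i + 1}" by auto

lemma fp_nonneg:
  assumes "\<And>a b. P a b \<ge> 0"
  shows "first_passage P n i j \<ge> 0"
  using assms by (induction P n i j rule: first_passage.induct) (auto intro!: sum_nonneg mult_nonneg_nonneg)

lemma S_rec:
  "(\<Sum>m<Suc n. first_passage P (Suc m) k j) =
   P k j + (\<Sum>k'\<in>{k-1..k+1}-{j}. P k k' * (\<Sum>m<n. first_passage P (Suc m) k' j))"
proof -
  have "(\<Sum>m<Suc n. first_passage P (Suc m) k j) = P k j + (\<Sum>m<n. first_passage P (Suc (Suc m)) k j)"
    by (subst sum.lessThan_Suc_shift) simp
  also have "(\<Sum>m<n. first_passage P (Suc (Suc m)) k j)
     = (\<Sum>m<n. \<Sum>k'\<in>{k-1..k+1}-{j}. P k k' * first_passage P (Suc m) k' j)"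
    by simp
  also have "\<dots> = (\<Sum>k'\<in>{k-1..k+1}-{j}. P k k' * (\<Sum>m<n. first_passage P (Suc m) k' j))"
    by (subst sum.swap) (simp add: sum_distrib_left)
  finally show ?thesis .
qed

definition hfun :: "real \<Rightarrow> int \<Rightarrow> int \<Rightarrow> real" where
  "hfun \<rho> j k = (if k \<le> j then 1 else \<rho> ^ nat (k - j))"

locale kern =
  fixes P :: "int \<Rightarrow> int \<Rightarrow> real" and \<rho> :: real
  assumes nonneg: "\<And>a b. P a b \<ge> 0"
    and row: "\<And>a. P a (a - 1) + P a a + P a (a + 1) = 1"
    and zero: "\<And>a b. b \<notin> {a - 1, a, a + 1} \<Longrightarrow> P a b = 0"
    and drift: "\<And>a. a \<ge> 2 \<Longrightarrow> P a (a - 1) \<le> \<rho> * P a (a + 1)"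
    and rho0: "0 \<le> \<rho>" and rho1: "\<rho> \<le> 1"
begin

lemma h_nonneg: "hfun \<rho> j k \<ge> 0"
  by (simp add: hfun_def rho0)

lemma sum_nbhd: fixes k :: int and f :: "int \<Rightarrow> real" shows "(\<Sum>k'\<in>{k-1..k+1}. f k') = f (k - 1) + f k + f (k + 1)"
  unfolding nbhd by simp

lemma superharm:
  assumes j: "j \<ge> 1"
  shows "(\<Sum>k'\<in>{k-1..k+1}. P k k' * hfun \<rho> j k') \<le> hfun \<rho> j k"
proof -
  have r: "P k (k - 1) + P k k + P k (k + 1) = 1" by (rule row)
  consider "k < j" | "k = j" | "k > j" by linarith
  then show ?thesis
  proof cases
    case 1
    then show ?thesis using r by (simp add: sum_nbhd hfun_def)
  next
    case 2
    have "P k (k + 1) * \<rho> \<le> P k (k + 1)"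
      using nonneg[of k "k+1"] rho1 by (simp add: mult_left_le)
    then show ?thesis using 2 r by (simp add: sum_nbhd hfun_def)
  next
    case 3
    define e where "e = nat (k - j) - 1"
    have ke: "nat (k - j) = Suc e" using 3 e_def by simp
    have h1: "hfun \<rho> j (k - 1) = \<rho> ^ e"
    proof (cases "k - 1 \<le> j")
      case True
      then have "e = 0" using 3 ke by linarith
      then show ?thesis using True by (simp add: hfun_def)
    next
      case False
      then have "nat (k - 1 - j) = e" using ke by linarith
      then show ?thesis using False by (simp add: hfun_def)
    qed
    have h0: "hfun \<rho> j k = \<rho> ^ Suc e" using 3 ke by (simp add: hfun_def)
    have h2: "hfun \<rho> j (k + 1) = \<rho> ^ Suc (Suc e)"
    proof -
      have "nat (k + 1 - j) = Suc (Suc e)" using ke by simp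
      then show ?thesis using 3 by (simp add: hfun_def)
    qed
    have dr: "P k (k - 1) \<le> \<rho> * P k (k + 1)" using drift 3 j by simp
    have key: "P k (k - 1) + P k k * \<rho> + P k (k + 1) * \<rho>^2 \<le> \<rho>"
    proof -
      have pkk: "P k k = 1 - P k (k - 1) - P k (k + 1)" using r by simp
      have "P k (k - 1) + P k k * \<rho> + P k (k + 1) * \<rho>^2 - \<rho>
          = (1 - \<rho>) * (P k (k - 1) - \<rho> * P k (k + 1))"
        unfolding pkk by (simp add: algebra_simps power2_eq_square)
      also have "\<dots> \<le> 0" using dr rho1 by (simp add: mult_nonneg_nonpos)
      finally show ?thesis by simp
    qed
    have "(\<Sum>k'\<in>{k-1..k+1}. P k k' * hfun \<rho> j k')
        = \<rho> ^ e * (P k (k - 1) + P k k * \<rho> + P k (k + 1) * \<rho>^2)"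
      unfolding sum_nbhd h0 h1 h2 by (simp add: algebra_simps power2_eq_square)
    also have "\<dots> \<le> \<rho> ^ e * \<rho>"
      using key rho0 by (simp add: mult_left_mono)
    finally show ?thesis using h0 by (simp add: mult.commute)
  qed
qed

lemma step_eq:
  fixes g :: "int \<Rightarrow> real"
  assumes "g j = 1"
  shows "P k j + (\<Sum>k'\<in>{k-1..k+1}-{j}. P k k' * g k') = (\<Sum>k'\<in>{k-1..k+1}. P k k' * g k')"
proof (cases "j \<in> {k-1..k+1}")
  case True
  then show ?thesis by (simp add: sum_diff1 assms)
next
  case False
  then have "P k j = 0" using zero[of j k] nbhd[of k] by auto
  then show ?thesis using False by simp
qed

lemma S_bound:
  assumes j: "j \<ge> 1"
  shows "(\<Sum>m<n. first_passage P (Suc m) k j) \<le> hfun \<rho> j k"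
proof (induction n arbitrary: k)
  case 0
  then show ?case by (simp add: h_nonneg)
next
  case (Suc n)
  have "(\<Sum>m<Suc n. first_passage P (Suc m) k j)
     = P k j + (\<Sum>k'\<in>{k-1..k+1}-{j}. P k k' * (\<Sum>m<n. first_passage P (Suc m) k' j))"
    by (rule S_rec)
  also have "\<dots> \<le> P k j + (\<Sum>k'\<in>{k-1..k+1}-{j}. P k k' * hfun \<rho> j k')"
    by (intro add_left_mono sum_mono mult_left_mono Suc.IH nonneg)
  also have "\<dots> = (\<Sum>k'\<in>{k-1..k+1}. P k k' * hfun \<rho> j k')"
    by (rule step_eq) (simp add: hfun_def)
  also have "\<dots> \<le> hfun \<rho> j k" by (rule superharm[OF j])
  finally show ?case .
qed

lemma ret_bound:
  assumes j: "j \<ge> 1"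
  shows "(\<Sum>m<n. first_passage P (Suc m) j j) \<le> 1 - (1 - \<rho>) * P j (j + 1)"
proof (cases n)
  case 0
  have "P j (j + 1) \<le> 1" using row[of j] nonneg[of j j] nonneg[of j "j - 1"] by linarith
  then have "(1 - \<rho>) * P j (j + 1) \<le> 1" using rho0 rho1 nonneg[of j "j+1"]
    by (intro mult_le_one) auto
  then show ?thesis using 0 by simp
next
  case (Suc n')
  have e: "{j-1..j+1} - {j} = {j - 1, j + 1}" by auto
  have "(\<Sum>m<Suc n'. first_passage P (Suc m) j j)
     = P j j + (\<Sum>k'\<in>{j-1..j+1}-{j}. P j k' * (\<Sum>m<n'. first_passage P (Suc m) k' j))"
    by (rule S_rec)
  also have "\<dots> \<le> P j j + (\<Sum>k'\<in>{j-1..j+1}-{j}. P j k' * hfun \<rho> j k')"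
    by (intro add_left_mono sum_mono mult_left_mono S_bound j nonneg)
  also have "\<dots> = P j j + P j (j - 1) + P j (j + 1) * \<rho>"
    by (simp add: e hfun_def)
  also have "\<dots> = 1 - (1 - \<rho>) * P j (j + 1)" using row[of j] by (simp add: algebra_simps)
  finally show ?thesis using Suc by simp
qed

lemma transient:
  assumes rho: "\<rho> < 1" and pos: "\<And>j. j \<ge> 1 \<Longrightarrow> P j (j + 1) > 0"
  shows "transient_chain P"
  unfolding transient_chain_def return_prob_def
proof (intro allI impI conjI)
  fix i :: int assume i: "i \<ge> 1"
  have bnd: "\<And>n. (\<Sum>m<n. first_passage P (Suc m) i i) \<le> 1 - (1 - \<rho>) * P i (i + 1)"
    by (rule ret_bound[OF i])
  show sm: "summable (\<lambda>n. first_passage P (Suc n) i i)"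
  proof (rule bounded_imp_summable[where B = "1 - (1 - \<rho>) * P i (i + 1)"])
    fix n show "0 \<le> first_passage P (Suc n) i i" by (rule fp_nonneg) (rule nonneg)
    have "(\<Sum>k\<le>n. first_passage P (Suc k) i i) = (\<Sum>k<Suc n. first_passage P (Suc k) i i)"
      by (simp only: lessThan_Suc_atMost)
    then show "(\<Sum>k\<le>n. first_passage P (Suc k) i i) \<le> 1 - (1 - \<rho>) * P i (i + 1)"
      using bnd[of "Suc n"] by simp
  qed
  have "(\<Sum>n. first_passage P (Suc n) i i) \<le> 1 - (1 - \<rho>) * P i (i + 1)"
    by (rule suminf_le_const[OF sm bnd])
  also have "\<dots> < 1" using rho pos[OF i] by simp
  finally show "(\<Sum>n. first_passage P (Suc n) i i) < 1" .
qed

end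

definition "bb = (199/100::real)"
definition "ee = (1/100::real)"
definition "th = (9/10::real)"
abbreviation "PK \<equiv> noisy_kernel bb ee (1/2) th"

lemma exp_weight:
  fixes g :: "real \<Rightarrow> real \<Rightarrow> real"
  shows "measure_pmf.expectation (pair_pmf (weight_pmf b e (1/2)) (weight_pmf b e (1/2))) (\<lambda>(u, w). g u w)
   = (g b b + g b e + g e b + g e e) / 4"
proof -
  let ?f = "\<lambda>x::bool. (b - e) * of_bool x + e"
  have "pair_pmf (weight_pmf b e (1/2)) (weight_pmf b e (1/2))
        = map_pmf (\<lambda>(x, y). (?f x, ?f y)) (pair_pmf (bernoulli_pmf (1/2)) (bernoulli_pmf (1/2)))"
    unfolding weight_pmf_def by (rule map_pair[symmetric])
  then have "measure_pmf.expectation (pair_pmf (weight_pmf b e (1/2)) (weight_pmf b e (1/2))) (\<lambda>(u, w). g u w)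
     = measure_pmf.expectation (pair_pmf (bernoulli_pmf (1/2)) (bernoulli_pmf (1/2))) (\<lambda>(x,y). g (?f x) (?f y))"
    by (simp only: integral_map_pmf) (simp add: split_def)
  also have "\<dots> = (\<Sum>a\<in>UNIV. (\<lambda>(x,y). g (?f x) (?f y)) a * pmf (pair_pmf (bernoulli_pmf (1/2)) (bernoulli_pmf (1/2))) a)"
    by (rule integral_measure_pmf_real) auto
  also have "\<dots> = (g b b + g b e + g e b + g e e) / 4"
    by (simp add: UNIV_Times_UNIV[symmetric] UNIV_bool pmf_pair)
  finally show ?thesis .
qed

definition ratio :: "int \<Rightarrow> int \<Rightarrow> real" where
  "ratio m y = (pi_geo y * q_rw th y m) / (pi_geo m * q_rw th m y)"

lemma acc_eq: "noisy_accept bb ee (1/2) th m y =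
   (2 * min 1 (ratio m y) + min 1 (ratio m y * 199) + min 1 (ratio m y / 199)) / 4"
  unfolding noisy_accept_def
  by (subst exp_weight) (simp add: ratio_def bb_def ee_def)

lemma ratio_nonneg: "ratio m y \<ge> 0"
  unfolding ratio_def pi_geo_def q_rw_def th_def by auto

lemma acc_bounds: "0 \<le> noisy_accept bb ee (1/2) th m y" "noisy_accept bb ee (1/2) th m y \<le> 1"
  using ratio_nonneg[of m y] unfolding acc_eq by auto

lemma ratio_up: assumes "m \<ge> 1" shows "ratio m (m + 1) = 1/18"
proof -
  have "nat (m + 1) = Suc (nat m)" using assms by simp
  then show ?thesis using assms unfolding ratio_def pi_geo_def q_rw_def th_def by simp
qed

lemma acc_up: assumes "m \<ge> 1" shows "noisy_accept bb ee (1/2) th m (m + 1) \<ge> 1/4"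
  unfolding acc_eq ratio_up[OF assms] by simp

lemma q_nonneg: "q_rw th m y \<ge> 0" "q_rw th m y \<le> 1"
  unfolding q_rw_def th_def by auto

lemma qsum: "q_rw th m (m - 1) + q_rw th m (m + 1) = 1"
  unfolding q_rw_def th_def by auto

lemma PK_off: "y \<noteq> m \<Longrightarrow> PK m y = q_rw th m y * noisy_accept bb ee (1/2) th m y"
  unfolding noisy_kernel_def by simp

lemma PK_diag: "PK m m = 1 - (q_rw th m (m - 1) * noisy_accept bb ee (1/2) th m (m - 1)
    + q_rw th m (m + 1) * noisy_accept bb ee (1/2) th m (m + 1))"
  unfolding noisy_kernel_def by simp

lemma kern_PK: "kern PK (1/2)"
proof
  fix a b :: int
  show "0 \<le> PK a b"
  proof (cases "b = a")
    case True
    have "q_rw th a (a - 1) * noisy_accept bb ee (1/2) th a (a - 1) \<le> q_rw th a (a - 1)"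
      using acc_bounds q_nonneg by (simp add: mult_left_le)
    moreover have "q_rw th a (a + 1) * noisy_accept bb ee (1/2) th a (a + 1) \<le> q_rw th a (a + 1)"
      using acc_bounds q_nonneg by (simp add: mult_left_le)
    ultimately show ?thesis unfolding True using qsum[of a] PK_diag[of a] by linarith
  next
    case False
    then show ?thesis using PK_off acc_bounds q_nonneg by simp
  qed
next
  fix a :: int
  show "PK a (a - 1) + PK a a + PK a (a + 1) = 1"
    using PK_diag[of a] PK_off[of "a - 1" a] PK_off[of "a + 1" a] by simp
next
  fix a b :: int
  assume "b \<notin> {a - 1, a, a + 1}"
  then show "PK a b = 0" using PK_off[of b a] unfolding q_rw_def by auto
next
  fix a :: int assume a: "a \<ge> 2"
  have d: "PK a (a - 1) \<le> 1/10"
    using PK_off[of "a - 1" a] acc_bounds[of a "a - 1"] unfolding q_rw_def th_def by simp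
  have u: "PK a (a + 1) \<ge> 9/40"
    using PK_off[of "a + 1" a] acc_up[of a] a unfolding q_rw_def th_def by simp
  show "PK a (a - 1) \<le> 1 / 2 * PK a (a + 1)" using d u by linarith
qed simp_all

lemma PK_pos: "j \<ge> 1 \<Longrightarrow> PK j (j + 1) > 0"
  using PK_off[of "j + 1" j] acc_up[of j] unfolding q_rw_def th_def by simp

theorem proposition2p2:
  shows "\<exists>b \<epsilon> \<theta> :: real. b > 1 \<and> 0 < \<epsilon> \<and> \<epsilon> < 1 \<and> 0 < \<theta> \<and> \<theta> < 1 \<and>
           transient_chain (noisy_kernel b \<epsilon> ((1 - \<epsilon>) / (b - \<epsilon>)) \<theta>)"
proof (intro exI conjI)
  have s: "(1 - ee) / (bb - ee) = 1/2" by (simp add: bb_def ee_def)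
  show "transient_chain (noisy_kernel bb ee ((1 - ee) / (bb - ee)) th)"
    unfolding s by (rule kern.transient[OF kern_PK]) (auto intro: PK_pos)
qed (simp_all add: bb_def ee_def th_def)

end
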